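(* For $N\ge1$ and generic complex $\mathfrak t,\chi,u_1,\dots,u_N,v_1,\dots,v_N$, $$\frac{1}{\prod_{1\le i<j\le N}(u_i-u_j)}\det\Big[u_j^{N-i-1}\Big\{(u_j-\mathfrak t^{1-N})\prod_{l=1}^N\frac{1-\mathfrak tu_jv_l}{1-u_jv_l}+\mathfrak t^{1-i}(1-\chi u_j)\Big\}\Big]_{i,j=1}^N$$ $$=\frac{\prod_{i,j=1}^N(1-\mathfrak tu_iv_j)}{\prod_{1\le i<j\le N}(u_i-u_j)(v_i-v_j)}\det\left[\frac{(1-\mathfrak t^{-N}\chi)\mathfrak t(1-u_iv_j)+(1-\mathfrak t)(1-\mathfrak t^{1-N}v_j)}{(1-u_iv_j)(1-\mathfrak tu_iv_j)}\right]_{i,j=1}^N.$$ *)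

theory Defs
  imports Complex_Main "Jordan_Normal_Form.Determinant"
begin

(* Entries of the two matrices, with 1-based indices i (row) and j (column). *)
definition lhs_entry :: "nat \<Rightarrow> complex \<Rightarrow> complex \<Rightarrow> (nat \<Rightarrow> complex) \<Rightarrow> (nat \<Rightarrow> complex)
    \<Rightarrow> nat \<Rightarrow> nat \<Rightarrow> complex" where
  "lhs_entry N t \<chi> u v i j =
     u j powi (int N - int i - 1) *
     ((u j - t powi (1 - int N)) * (\<Prod>l=1..N. (1 - t * u j * v l) / (1 - u j * v l))
      + t powi (1 - int i) * (1 - \<chi> * u j))"

definition rhs_entry :: "nat \<Rightarrow> complex \<Rightarrow> complex \<Rightarrow> (nat \<Rightarrow> complex) \<Rightarrow> (nat \<Rightarrow> complex)
    \<Rightarrow> nat \<Rightarrow> nat \<Rightarrow> complex" where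
  "rhs_entry N t \<chi> u v i j =
     ((1 - t powi (- int N) * \<chi>) * t * (1 - u i * v j) + (1 - t) * (1 - t powi (1 - int N) * v j))
     / ((1 - u i * v j) * (1 - t * u i * v j))"

end

theory Submission
  imports Defs
begin

lemma det_row_scale:
  fixes c :: "nat \<Rightarrow> 'a::comm_ring_1"
  shows "det (mat n n (\<lambda>(i,j). c i * f i j)) = (\<Prod>i<n. c i) * det (mat n n (\<lambda>(i,j). f i j))"
proof -
  have A: "mat n n (\<lambda>(i,j). c i * f i j) \<in> carrier_mat n n" by simp
  have B: "mat n n (\<lambda>(i,j). f i j) \<in> carrier_mat n n" by simp
  show ?thesis unfolding det_def'[OF A] det_def'[OF B] sum_distrib_left
  proof (rule sum.cong[OF refl])
    fix p assume p: "p \<in> {p. p permutes {0..<n}}"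
    have "(\<Prod>i\<in>{0..<n}. mat n n (\<lambda>(i,j). c i * f i j) $$ (i, p i))
        = (\<Prod>i\<in>{0..<n}. c i * f i (p i))"
      by (rule prod.cong[OF refl]) (use p in \<open>auto simp: permutes_def\<close>)
    also have "\<dots> = (\<Prod>i<n. c i) * (\<Prod>i\<in>{0..<n}. mat n n (\<lambda>(i,j). f i j) $$ (i, p i))"
      unfolding prod.distrib atLeast0LessThan
      by (rule arg_cong[where f="\<lambda>x. _ * x"], rule prod.cong[OF refl])
         (use p in \<open>auto simp: permutes_def\<close>)
    finally show "signof p * (\<Prod>i\<in>{0..<n}. mat n n (\<lambda>(i,j). c i * f i j) $$ (i, p i))
      = (\<Prod>i<n. c i) * (signof p * (\<Prod>i\<in>{0..<n}. mat n n (\<lambda>(i,j). f i j) $$ (i, p i)))"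
      by simp
  qed
qed

lemma vandermonde:
  fixes x :: "nat \<Rightarrow> 'a::comm_ring_1"
  shows "det (mat n n (\<lambda>(i,j). x i ^ j)) = (\<Prod>i<n. \<Prod>j\<in>{i<..<n}. (x j - x i))"
proof (induction n arbitrary: x)
  case 0
  then show ?case by simp
next
  case (Suc n)
  define A where "A = mat (Suc n) (Suc n) (\<lambda>(i,j). x i ^ j)"
  define U where "U = mat (Suc n) (Suc n) (\<lambda>(i,j). if i = j then 1 else if j = Suc i then - x 0 else (0::'a))"
  define B where "B = mat (Suc n) (Suc n) (\<lambda>(i,j). if j = 0 then 1 else x i ^ (j - 1) * (x i - x 0))"
  have AU: "A * U = B"
  proof (rule eq_matI)
    fix i j assume i: "i < dim_row B" and j: "j < dim_col B"
    have "(A * U) $$ (i,j) = (\<Sum>k\<in>{0..<Suc n}. x i ^ k * U $$ (k, j))"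
      using i j by (simp add: A_def U_def B_def scalar_prod_def)
    also have "\<dots> = (\<Sum>k\<in>{0..<Suc n}. (if k = j then x i ^ k else 0) + (if Suc k = j then - x 0 * x i ^ k else 0))"
      by (rule sum.cong[OF refl]) (use j in \<open>auto simp: U_def B_def\<close>)
    also have "\<dots> = B $$ (i,j)"
    proof (cases j)
      case 0
      then show ?thesis using i j by (simp add: sum.distrib B_def)
    next
      case (Suc j')
      have "(\<Sum>k\<in>{0..<Suc n}. (if Suc k = j then - x 0 * x i ^ k else 0)) = - x 0 * x i ^ j'"
        using Suc j by (simp add: B_def)
      moreover have "(\<Sum>k\<in>{0..<Suc n}. (if k = j then x i ^ k else 0)) = x i ^ j"
        using j by (simp add: B_def)
      ultimately show ?thesis using i j Suc by (simp only: sum.distrib) (simp add: B_def algebra_simps)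
    qed
    finally show "(A * U) $$ (i,j) = B $$ (i,j)" .
  qed (auto simp: A_def U_def B_def)
  have detU: "det U = 1"
  proof -
    have "det U = prod_list (diag_mat U)"
      by (rule det_upper_triangular[of _ "Suc n"]) (auto simp: upper_triangular_def U_def)
    also have "diag_mat U = map (\<lambda>_. 1) [0..<Suc n]" by (auto simp: diag_mat_def U_def)
    moreover have "prod_list (map (\<lambda>_. (1::'a)) xs) = 1" for xs :: "nat list" by (induct xs) auto
    ultimately show ?thesis by simp
  qed
  have "det A = det B"
    using det_mult[of A "Suc n" U] AU detU by (simp add: A_def U_def)
  also have "det B = (\<Sum>j<Suc n. B $$ (0,j) * cofactor B 0 j)"
    by (rule laplace_expansion_row) (auto simp: B_def)
  also have "\<dots> = cofactor B 0 0"
    by (subst sum.lessThan_Suc_shift) (simp add: B_def)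
  also have "\<dots> = det (mat n n (\<lambda>(i,j). (x (Suc i) - x 0) * (x (Suc i)) ^ j))"
    unfolding cofactor_def mat_delete_def
    by (simp, rule arg_cong[where f=det], rule eq_matI) (auto simp: B_def mult.commute)
  also have "\<dots> = (\<Prod>i<n. (x (Suc i) - x 0)) * (\<Prod>i<n. \<Prod>j\<in>{i<..<n}. (x (Suc j) - x (Suc i)))"
    using det_row_scale[where c="\<lambda>i. x (Suc i) - x 0" and f="\<lambda>i j. x (Suc i) ^ j" and n=n] Suc.IH[of "\<lambda>i. x (Suc i)"]
    by simp
  also have "\<dots> = (\<Prod>i<Suc n. \<Prod>j\<in>{i<..<Suc n}. (x j - x i))"
  proof -
    have e: "\<And>i m. {i<..<m} = {Suc i..<m}" by auto
    have 1: "(\<Prod>j\<in>{0<..<Suc n}. (x j - x 0)) = (\<Prod>i<n. (x (Suc i) - x 0))"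
      unfolding e prod.shift_bounds_Suc_ivl atLeast0LessThan ..
    have 2: "(\<Prod>j\<in>{Suc i<..<Suc n}. (x j - x (Suc i))) = (\<Prod>j\<in>{i<..<n}. (x (Suc j) - x (Suc i)))" for i
      unfolding e prod.shift_bounds_Suc_ivl ..
    show ?thesis unfolding prod.lessThan_Suc_shift 1 2 ..
  qed
  finally show ?case by (simp add: A_def)
qed


lemma poly_sum_lt:
  fixes p :: "'a::comm_ring_1 poly"
  assumes "degree p < n"
  shows "poly p x = (\<Sum>k<n. coeff p k * x ^ k)"
proof -
  have "(\<Sum>k\<le>degree p. coeff p k * x ^ k) = (\<Sum>k<n. coeff p k * x ^ k)"
    by (rule sum.mono_neutral_left) (use assms in \<open>auto simp: coeff_eq_0\<close>)
  then show ?thesis by (simp add: poly_altdef)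
qed

lemma Fprops:
  fixes v :: "nat \<Rightarrow> 'a::comm_ring_1"
  assumes "finite S"
  shows "degree (\<Prod>l\<in>S. [:- v l, 1:]) \<le> card S"
    and "poly (\<Prod>l\<in>S. [:- v l, 1:]) y = (\<Prod>l\<in>S. (y - v l))"
proof -
  have "degree (\<Prod>l\<in>S. [:- v l, 1:]) \<le> (\<Sum>l\<in>S. degree [:- v l, 1:])"
    using degree_prod_sum_le[OF assms, of "\<lambda>l. [:- v l, 1:]"] by (simp add: o_def)
  also have "\<dots> \<le> (\<Sum>l\<in>S. 1)" by (rule sum_mono) auto
  finally show "degree (\<Prod>l\<in>S. [:- v l, 1:]) \<le> card S" by simp
  show "poly (\<Prod>l\<in>S. [:- v l, 1:]) y = (\<Prod>l\<in>S. (y - v l))"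
    by (simp add: poly_prod)
qed

lemma Gsum:
  fixes v :: "nat \<Rightarrow> complex" and z :: complex
  assumes "finite S" "card S = N - 1" "N \<ge> 1" "z \<noteq> 0"
  shows "(\<Sum>k<N. coeff (\<Prod>l\<in>S. [:- v l, 1:]) k * z powi (int N - int k - 2))
       = z powi (-1) * (\<Prod>l\<in>S. (1 - z * v l))"
proof -
  let ?F = "\<Prod>l\<in>S. [:- v l, 1:]"
  have deg: "degree ?F < N" using Fprops(1)[OF assms(1), of v] assms by linarith
  have "(\<Sum>k<N. coeff ?F k * z powi (int N - int k - 2))
      = (\<Sum>k<N. z powi (int N - 2) * (coeff ?F k * (1/z) ^ k))"
  proof (rule sum.cong[OF refl])
    fix k
    have "z powi (int N - int k - 2) = z powi (int N - 2) * z powi (- int k)"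
      using assms(4) power_int_add[of z "int N - 2" "- int k"] by (simp add: algebra_simps)
    also have "z powi (- int k) = (1/z) ^ k" by (simp add: power_int_minus divide_inverse power_inverse)
    finally show "coeff ?F k * z powi (int N - int k - 2) = z powi (int N - 2) * (coeff ?F k * (1/z) ^ k)"
      by simp
  qed
  also have "\<dots> = z powi (int N - 2) * poly ?F (1/z)"
    by (simp add: poly_sum_lt[OF deg] sum_distrib_left)
  also have "\<dots> = z powi (int N - 2) * (\<Prod>l\<in>S. (1/z - v l))"
    by (simp add: Fprops(2)[OF assms(1)])
  also have "\<dots> = z powi (-1) * (z ^ card S * (\<Prod>l\<in>S. (1/z - v l)))"
  proof -
    have "z powi (int N - 2) = z powi (-1) * z powi (int (card S))"
    proof -
      have "int N - 2 = -1 + int (card S)" using assms by (simp add: of_nat_diff)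
      then show ?thesis using power_int_add[of z "-1" "int (card S)"] assms(4) by simp
    qed
    then show ?thesis by simp
  qed
  also have "z ^ card S * (\<Prod>l\<in>S. (1/z - v l)) = (\<Prod>l\<in>S. (1 - z * v l))"
  proof -
    have "z ^ card S * (\<Prod>l\<in>S. (1/z - v l)) = (\<Prod>l\<in>S. z * (1/z - v l))"
      by (simp add: prod.distrib)
    also have "\<dots> = (\<Prod>l\<in>S. (1 - z * v l))"
      using assms(4) by (simp add: algebra_simps)
    finally show ?thesis .
  qed
  finally show ?thesis .
qed


lemma alg: fixes w t \<chi> r va TS ES :: complex
assumes w: "w\<noteq>0" and t: "t\<noteq>0" and E: "ES\<noteq>0" and d1: "1 - w*va \<noteq> 0" and d2: "1 - t*w*va \<noteq> 0"
shows "((w - r*t) * (((1 - t*w*va)/(1 - w*va)) * (TS/ES))) * (w powi (-1) * ES) + (1 - \<chi>*w) * (r*t*t * ((t*w) powi (-1) * TS)) = ((1 - t*w*va) * TS) * (((1 - r*\<chi>)*t*(1 - w*va) + (1-t)*(1 - r*t*va)) / ((1 - w*va) * (1 - t*w*va)))"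
proof -
  have key: "(w - r*t) * (1 - t*w*va) + r*t*(1 - \<chi>*w)*(1 - w*va) = w * ((1 - r*\<chi>)*t*(1 - w*va) + (1-t)*(1 - r*t*va))"
    by (simp add: algebra_simps)
  have L: "((w - r*t) * (((1 - t*w*va)/(1 - w*va)) * (TS/ES))) * (w powi (-1) * ES) + (1 - \<chi>*w) * (r*t*t * ((t*w) powi (-1) * TS))
     = TS / (w * (1 - w*va)) * ((w - r*t) * (1 - t*w*va) + r*t*(1 - \<chi>*w)*(1 - w*va))"
    using w t E d1 by (simp add: power_int_minus divide_simps) (simp add: algebra_simps)
  have R: "((1 - t*w*va) * TS) * (((1 - r*\<chi>)*t*(1 - w*va) + (1-t)*(1 - r*t*va)) / ((1 - w*va) * (1 - t*w*va)))
     = TS / (1 - w*va) * ((1 - r*\<chi>)*t*(1 - w*va) + (1-t)*(1 - r*t*va))"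
    using d1 d2 by (simp add: divide_simps)
  show ?thesis unfolding L R key using w by simp
qed

lemma core:
  fixes N :: nat and t \<chi> :: complex and u v :: "nat \<Rightarrow> complex"
  assumes N: "N \<ge> 1" and t: "t \<noteq> 0" and ui: "u i \<noteq> 0" and a: "a \<in> {1..N}"
    and nz: "\<forall>l\<in>{1..N}. u i * v l \<noteq> 1 \<and> t * u i * v l \<noteq> 1"
  shows "(\<Sum>k<N. lhs_entry N t \<chi> u v (k+1) i * coeff (\<Prod>l\<in>{1..N}-{a}. [:- v l, 1:]) k)
       = (\<Prod>l=1..N. (1 - t * u i * v l)) * rhs_entry N t \<chi> u v i a"
proof -
  define S where "S = {1..N} - {a}"
  define F where "F = (\<Prod>l\<in>S. [:- v l, 1:])"
  define w where "w = u i"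
  define P where "P = (\<Prod>l=1..N. (1 - t * w * v l) / (1 - w * v l))"
  define s where "s = t powi (1 - int N)"
  define r where "r = t powi (- int N)"
  define TS where "TS = (\<Prod>l\<in>S. (1 - t * w * v l))"
  define ES where "ES = (\<Prod>l\<in>S. (1 - w * v l))"
  have finS: "finite S" and cardS: "card S = N - 1" using a by (auto simp: S_def)
  have w0: "w \<noteq> 0" using ui by (simp add: w_def)
  have tw0: "t * w \<noteq> 0" using w0 t by simp
  have e1: "(\<Sum>k<N. coeff F k * w powi (int N - int k - 2)) = w powi (-1) * ES"
    unfolding F_def ES_def using Gsum[OF finS cardS N w0] .
  have e2': "(\<Sum>k<N. coeff F k * (t*w) powi (int N - int k - 2)) = (t*w) powi (-1) * TS"
    unfolding F_def TS_def using Gsum[OF finS cardS N tw0] by (simp add: mult.assoc)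
  have e2: "(\<Sum>k<N. coeff F k * (t powi (- int k) * w powi (int N - int k - 2)))
      = t powi (2 - int N) * ((t*w) powi (-1) * TS)"
  proof -
    have "(\<Sum>k<N. coeff F k * (t powi (- int k) * w powi (int N - int k - 2)))
        = (\<Sum>k<N. t powi (2 - int N) * (coeff F k * (t*w) powi (int N - int k - 2)))"
    proof (rule sum.cong[OF refl])
      fix k
      have "t powi (- int k) = t powi (2 - int N) * t powi (int N - int k - 2)"
        using t power_int_add[of t "2 - int N" "int N - int k - 2"] by simp
      then show "coeff F k * (t powi (- int k) * w powi (int N - int k - 2))
          = t powi (2 - int N) * (coeff F k * (t*w) powi (int N - int k - 2))"
        by (simp add: power_int_mult_distrib)
    qed
    also have "\<dots> = t powi (2 - int N) * ((t*w) powi (-1) * TS)"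
      by (simp add: sum_distrib_left[symmetric] e2')
    finally show ?thesis .
  qed
  have lhs: "(\<Sum>k<N. lhs_entry N t \<chi> u v (k+1) i * coeff F k)
      = ((w - s) * P) * (w powi (-1) * ES) + (1 - \<chi> * w) * (t powi (2 - int N) * ((t*w) powi (-1) * TS))"
  proof -
    have "(\<Sum>k<N. lhs_entry N t \<chi> u v (k+1) i * coeff F k)
      = (\<Sum>k<N. ((w - s) * P) * (coeff F k * w powi (int N - int k - 2))
           + (1 - \<chi> * w) * (coeff F k * (t powi (- int k) * w powi (int N - int k - 2))))"
    proof (rule sum.cong[OF refl])
      fix k
      have i1: "int N - int (k + 1) - 1 = int N - int k - 2" by simp
      have i2: "1 - int (k + 1) = - int k" by simp
      show "lhs_entry N t \<chi> u v (k+1) i * coeff F k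
        = ((w - s) * P) * (coeff F k * w powi (int N - int k - 2))
           + (1 - \<chi> * w) * (coeff F k * (t powi (- int k) * w powi (int N - int k - 2)))"
        unfolding lhs_entry_def i1 i2 by (simp add: w_def P_def s_def algebra_simps)
    qed
    also have "\<dots> = ((w - s) * P) * (\<Sum>k<N. coeff F k * w powi (int N - int k - 2))
        + (1 - \<chi> * w) * (\<Sum>k<N. coeff F k * (t powi (- int k) * w powi (int N - int k - 2)))"
      by (simp add: sum.distrib sum_distrib_left)
    finally show ?thesis unfolding e1 e2 .
  qed
  have va: "1 - w * v a \<noteq> 0" "1 - t * w * v a \<noteq> 0" using nz a by (auto simp: w_def)
  have ES0: "ES \<noteq> 0" unfolding ES_def using nz by (auto simp: S_def w_def)
  have Tf: "(\<Prod>l=1..N. (1 - t * w * v l)) = (1 - t * w * v a) * TS"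
    unfolding TS_def S_def using a by (subst prod.remove[of _ a]) auto
  have Ef: "(\<Prod>l=1..N. (1 - w * v l)) = (1 - w * v a) * ES"
    unfolding ES_def S_def using a by (subst prod.remove[of _ a]) auto
  have Pf: "P = ((1 - t * w * v a) / (1 - w * v a)) * (TS / ES)"
    unfolding P_def prod_dividef Tf Ef by simp
  have sr: "s = r * t" unfolding s_def r_def
    using t power_int_add[of t "- int N" 1] by simp
  have t2: "t powi (2 - int N) = s * t" unfolding s_def
    using t power_int_add[of t "1 - int N" 1] by simp
  have rhs: "rhs_entry N t \<chi> u v i a = ((1 - r * \<chi>) * t * (1 - w * v a) + (1 - t) * (1 - s * v a))
       / ((1 - w * v a) * (1 - t * w * v a))"
    unfolding rhs_entry_def r_def s_def w_def ..
  show ?thesis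
    unfolding S_def[symmetric] F_def[symmetric] lhs w_def[symmetric] Tf rhs Pf t2
    unfolding sr using alg[OF w0 t ES0 va] by simp
qed


lemma prod_pairs_split:
  fixes v :: "nat \<Rightarrow> complex"
  shows "(\<Prod>i=1..N. \<Prod>l\<in>{1..N}-{i}. (v i - v l))
       = (\<Prod>i=1..N. \<Prod>j\<in>{i<..N}. (v j - v i)) * (\<Prod>i=1..N. \<Prod>j\<in>{i<..N}. (v i - v j))"
proof -
  have "(\<Prod>i=1..N. \<Prod>l\<in>{1..N}-{i}. (v i - v l))
      = (\<Prod>i=1..N. (\<Prod>l\<in>{l\<in>{1..N}. l < i}. (v i - v l)) * (\<Prod>l\<in>{i<..N}. (v i - v l)))"
  proof (rule prod.cong[OF refl])
    fix i assume i: "i \<in> {1..N}"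
    have e: "{1..N}-{i} = {l\<in>{1..N}. l < i} \<union> {i<..N}" using i by auto
    have d: "{l\<in>{1..N}. l < i} \<inter> {i<..N} = {}" by (simp add: disjoint_iff)
    show "(\<Prod>l\<in>{1..N}-{i}. (v i - v l)) = (\<Prod>l\<in>{l\<in>{1..N}. l < i}. (v i - v l)) * (\<Prod>l\<in>{i<..N}. (v i - v l))"
      unfolding e by (rule prod.union_disjoint[OF _ _ d]) simp_all
  qed
  also have "\<dots> = (\<Prod>i=1..N. \<Prod>l\<in>{l\<in>{1..N}. l < i}. (v i - v l)) * (\<Prod>i=1..N. \<Prod>l\<in>{i<..N}. (v i - v l))"
    by (rule prod.distrib)
  also have "(\<Prod>i=1..N. \<Prod>l\<in>{l\<in>{1..N}. l < i}. (v i - v l)) = (\<Prod>l=1..N. \<Prod>i\<in>{i\<in>{1..N}. l < i}. (v i - v l))"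
    by (rule prod.swap_restrict) simp_all
  also have "\<dots> = (\<Prod>i=1..N. \<Prod>j\<in>{i<..N}. (v j - v i))"
  proof (rule prod.cong[OF refl])
    fix l assume "l \<in> {1..N}"
    have "{i\<in>{1..N}. l < i} = {l<..N}" by auto
    then show "(\<Prod>i\<in>{i\<in>{1..N}. l < i}. (v i - v l)) = (\<Prod>j\<in>{l<..N}. (v j - v l))" by simp
  qed
  finally show ?thesis .
qed

lemma detK:
  fixes v :: "nat \<Rightarrow> complex"
  assumes dist: "\<forall>i\<in>{1..N}. \<forall>j\<in>{1..N}. i \<noteq> j \<longrightarrow> v i \<noteq> v j"
  shows "det (mat N N (\<lambda>(k,j). coeff (\<Prod>l\<in>{1..N}-{j+1}. [:- v l, 1:]) k))
       = (\<Prod>i=1..N. \<Prod>j\<in>{i<..N}. (v i - v j))"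
proof -
  define K where "K = mat N N (\<lambda>(k,j). coeff (\<Prod>l\<in>{1..N}-{j+1}. [:- v l, 1:]) k)"
  define V where "V = mat N N (\<lambda>(i,k). v (i+1) ^ k)"
  define D where "D = mat N N (\<lambda>(i,j). if i = j then (\<Prod>l\<in>{1..N}-{i+1}. (v (i+1) - v l)) else 0)"
  have VK: "V * K = D"
  proof (rule eq_matI)
    fix i j assume i: "i < dim_row D" and j: "j < dim_col D"
    let ?F = "\<Prod>l\<in>{1..N}-{j+1}. [:- v l, 1:]"
    have deg: "degree ?F < N" using Fprops(1)[of "{1..N}-{j+1}" v] j by (auto simp: D_def)
    have "(V * K) $$ (i,j) = (\<Sum>k\<in>{0..<N}. v (i+1) ^ k * coeff ?F k)"
      using i j by (simp add: V_def K_def D_def scalar_prod_def)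
    also have "\<dots> = poly ?F (v (i+1))"
      unfolding poly_sum_lt[OF deg] atLeast0LessThan by (simp add: mult.commute)
    also have "\<dots> = (\<Prod>l\<in>{1..N}-{j+1}. (v (i+1) - v l))" by (simp add: Fprops(2))
    also have "\<dots> = D $$ (i,j)"
    proof (cases "i = j")
      case True then show ?thesis using i j by (simp add: D_def)
    next
      case False
      then have "i+1 \<in> {1..N}-{j+1}" using i by (auto simp: D_def)
      then have "(\<Prod>l\<in>{1..N}-{j+1}. (v (i+1) - v l)) = 0"
        by (intro prod_zero) auto
      then show ?thesis using i j False by (simp add: D_def)
    qed
    finally show "(V * K) $$ (i,j) = D $$ (i,j)" .
  qed (auto simp: V_def K_def D_def)
  have detD: "det D = (\<Prod>i=1..N. \<Prod>l\<in>{1..N}-{i}. (v i - v l))"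
  proof -
    have "det D = prod_list (diag_mat D)"
      by (rule det_upper_triangular[of _ N]) (auto simp: upper_triangular_def D_def)
    also have "\<dots> = (\<Prod>i<N. \<Prod>l\<in>{1..N}-{i+1}. (v (i+1) - v l))"
      by (simp add: diag_mat_def D_def prod.list_conv_set_nth atLeast0LessThan)
    also have "\<dots> = (\<Prod>i=1..N. \<Prod>l\<in>{1..N}-{i}. (v i - v l))"
      by (simp add: prod.atLeast1_atMost_eq)
    finally show ?thesis .
  qed
  have detV: "det V = (\<Prod>i=1..N. \<Prod>j\<in>{i<..N}. (v j - v i))"
  proof -
    have "det V = (\<Prod>i<N. \<Prod>j\<in>{i<..<N}. (v (j+1) - v (i+1)))"
      unfolding V_def using vandermonde[of N "\<lambda>i. v (i+1)"] by simp
    also have "\<dots> = (\<Prod>i<N. \<Prod>j\<in>{Suc i<..N}. (v j - v (Suc i)))"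
    proof (rule prod.cong[OF refl])
      fix i
      have e1: "{i<..<N} = {Suc i..<N}" by auto
      have e2: "{Suc i<..N} = {Suc (Suc i)..<Suc N}" by auto
      show "(\<Prod>j\<in>{i<..<N}. (v (j+1) - v (i+1))) = (\<Prod>j\<in>{Suc i<..N}. (v j - v (Suc i)))"
        unfolding e1 e2 prod.shift_bounds_Suc_ivl by simp
    qed
    also have "\<dots> = (\<Prod>i=1..N. \<Prod>j\<in>{i<..N}. (v j - v i))"
      by (simp add: prod.atLeast1_atMost_eq)
    finally show ?thesis .
  qed
  have V0: "det V \<noteq> 0" unfolding detV
  proof -
    have "\<forall>i\<in>{1..N}. \<forall>j\<in>{i<..N}. v j - v i \<noteq> 0" using dist by fastforce
    then show "(\<Prod>i=1..N. \<Prod>j\<in>{i<..N}. (v j - v i)) \<noteq> 0" by simp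
  qed
  have "det V * det K = det D"
    using det_mult[of V N K] VK by (simp add: V_def K_def)
  also have "\<dots> = det V * (\<Prod>i=1..N. \<Prod>j\<in>{i<..N}. (v i - v j))"
    unfolding detD prod_pairs_split detV ..
  finally have "det K = (\<Prod>i=1..N. \<Prod>j\<in>{i<..N}. (v i - v j))"
    using V0 by (metis mult_left_cancel)
  then show ?thesis by (simp add: K_def)
qed


theorem mainTheorem6:
  fixes N :: nat and t \<chi> :: complex and u v :: "nat \<Rightarrow> complex"
  assumes "N \<ge> 1"
    and "t \<noteq> 0"
    and "\<forall>i\<in>{1..N}. u i \<noteq> 0"
    and "\<forall>i\<in>{1..N}. \<forall>j\<in>{1..N}. i \<noteq> j \<longrightarrow> u i \<noteq> u j"
    and "\<forall>i\<in>{1..N}. \<forall>j\<in>{1..N}. i \<noteq> j \<longrightarrow> v i \<noteq> v j"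
    and "\<forall>i\<in>{1..N}. \<forall>j\<in>{1..N}. u i * v j \<noteq> 1 \<and> t * u i * v j \<noteq> 1"
  shows "(1 / (\<Prod>i=1..N. \<Prod>j\<in>{i<..N}. (u i - u j)))
           * det (mat N N (\<lambda>(i, j). lhs_entry N t \<chi> u v (i + 1) (j + 1)))
       = (\<Prod>i=1..N. \<Prod>j=1..N. (1 - t * u i * v j))
           / (\<Prod>i=1..N. \<Prod>j\<in>{i<..N}. (u i - u j) * (v i - v j))
           * det (mat N N (\<lambda>(i, j). rhs_entry N t \<chi> u v (i + 1) (j + 1)))"
proof -
  note N = assms(1) and t = assms(2) and u0 = assms(3) and du = assms(4) and dv = assms(5) and nz = assms(6)
  define L where "L = mat N N (\<lambda>(i, j). lhs_entry N t \<chi> u v (i + 1) (j + 1))"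
  define R where "R = mat N N (\<lambda>(i, j). rhs_entry N t \<chi> u v (i + 1) (j + 1))"
  define K where "K = mat N N (\<lambda>(k,j). coeff (\<Prod>l\<in>{1..N}-{j+1}. [:- v l, 1:]) k)"
  define c where "c = (\<lambda>i. \<Prod>l=1..N. (1 - t * u (i+1) * v l))"
  define Phi where "Phi = mat N N (\<lambda>(i, j). c i * rhs_entry N t \<chi> u v (i + 1) (j + 1))"
  define Du where "Du = (\<Prod>i=1..N. \<Prod>j\<in>{i<..N}. (u i - u j))"
  define Dv where "Dv = (\<Prod>i=1..N. \<Prod>j\<in>{i<..N}. (v i - v j))"
  define Pt where "Pt = (\<Prod>i=1..N. \<Prod>j=1..N. (1 - t * u i * v j))"
  have LK: "transpose_mat L * K = Phi"
  proof (rule eq_matI)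
    fix i j assume i: "i < dim_row Phi" and j: "j < dim_col Phi"
    have iN: "i < N" and jN: "j < N" using i j by (auto simp: Phi_def)
    have "(transpose_mat L * K) $$ (i,j) = (\<Sum>k\<in>{0..<N}. lhs_entry N t \<chi> u v (k+1) (i+1) * coeff (\<Prod>l\<in>{1..N}-{j+1}. [:- v l, 1:]) k)"
      using iN jN by (simp add: L_def K_def scalar_prod_def)
    also have "\<dots> = c i * rhs_entry N t \<chi> u v (i + 1) (j + 1)"
      unfolding atLeast0LessThan c_def
      by (rule core[OF N t]) (use u0 nz iN jN in auto)
    also have "\<dots> = Phi $$ (i,j)" using iN jN by (simp add: Phi_def)
    finally show "(transpose_mat L * K) $$ (i,j) = Phi $$ (i,j)" .
  qed (auto simp: L_def K_def Phi_def)
  have "det Phi = det L * det K"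
    using LK[symmetric] det_mult[of "transpose_mat L" N K] det_transpose[of L N]
    by (simp add: L_def K_def)
  also have "det K = Dv" unfolding K_def Dv_def by (rule detK[OF dv])
  finally have e1: "det Phi = det L * Dv" .
  have "det Phi = (\<Prod>i<N. c i) * det R"
    unfolding Phi_def R_def by (rule det_row_scale)
  also have "(\<Prod>i<N. c i) = Pt" unfolding c_def Pt_def
    by (simp add: prod.atLeast1_atMost_eq)
  finally have e2: "det Phi = Pt * det R" .
  have Du0: "Du \<noteq> 0"
  proof -
    have "\<forall>i\<in>{1..N}. \<forall>j\<in>{i<..N}. u i - u j \<noteq> 0" using du by fastforce
    then show ?thesis unfolding Du_def by simp
  qed
  have Dv0: "Dv \<noteq> 0"
  proof -
    have "\<forall>i\<in>{1..N}. \<forall>j\<in>{i<..N}. v i - v j \<noteq> 0" using dv by fastforce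
    then show ?thesis unfolding Dv_def by simp
  qed
  have DD: "(\<Prod>i=1..N. \<Prod>j\<in>{i<..N}. (u i - u j) * (v i - v j)) = Du * Dv"
    unfolding Du_def Dv_def by (simp add: prod.distrib)
  show ?thesis
    unfolding DD L_def[symmetric] R_def[symmetric] Du_def[symmetric] Pt_def[symmetric]
    using e1 e2 Du0 Dv0 by (simp add: field_simps)
qed

end
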